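(* Let $G$ be a bipartite graph with bipartition $\{X,Y\}$ such that $|V(G)|$ is divisible by $3$. Let $H$ be the graph with $V(H)=V(G)\cup\{x,y,x',y'\}$ (four new vertices) and $E(H)=E(G)\cup\{xv: v\in X\}\cup\{yv: v\in Y\}\cup\{xy,xx',x'y',yy'\}$, and let $k=|E(H)|-4|V(G)|/3-4$. If $H'$ is a cactus with $V(H')=V(H)$ obtained from $H$ by deleting at most $k$ edges, then the number of cycles of $H'$ equals $|V(G)|/3+1=(|V(H')|-1)/3$.
   Context: All graphs are finite, simple and undirected. A cactus is a connected graph in which every edge lies in at most one cycle. *)

theory Defs
  imports Main
begin

definition simple_graph :: "'a set \<Rightarrow> 'a set set \<Rightarrow> bool" where
  "simple_graph V E \<longleftrightarrow> finite V \<and> (\<forall>e\<in>E. \<exists>u v. e = {u, v} \<and> u \<noteq> v \<and> u \<in> V \<and> v \<in> V)"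

definition bipartition :: "'a set \<Rightarrow> 'a set set \<Rightarrow> 'a set \<Rightarrow> 'a set \<Rightarrow> bool" where
  "bipartition V E X Y \<longleftrightarrow> X \<union> Y = V \<and> X \<inter> Y = {} \<and>
     (\<forall>e\<in>E. \<exists>u v. e = {u, v} \<and> u \<in> X \<and> v \<in> Y)"

definition cycle_edges :: "'a list \<Rightarrow> 'a set set" where
  "cycle_edges vs = set (map (\<lambda>i. {vs ! i, vs ! ((i + 1) mod length vs)}) [0..<length vs])"

definition is_cycle :: "'a set \<Rightarrow> 'a set set \<Rightarrow> 'a set set \<Rightarrow> bool" where
  "is_cycle V E C \<longleftrightarrow> (\<exists>vs. length vs \<ge> 3 \<and> distinct vs \<and> set vs \<subseteq> V \<and>
      cycle_edges vs \<subseteq> E \<and> C = cycle_edges vs)"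

definition num_cycles :: "'a set \<Rightarrow> 'a set set \<Rightarrow> nat" where
  "num_cycles V E = card {C. is_cycle V E C}"

definition connected_graph :: "'a set \<Rightarrow> 'a set set \<Rightarrow> bool" where
  "connected_graph V E \<longleftrightarrow> V \<noteq> {} \<and>
     (\<forall>u\<in>V. \<forall>v\<in>V. (\<lambda>a b. {a, b} \<in> E)\<^sup>*\<^sup>* u v)"

definition cactus :: "'a set \<Rightarrow> 'a set set \<Rightarrow> bool" where
  "cactus V E \<longleftrightarrow> simple_graph V E \<and> connected_graph V E \<and>
     (\<forall>e\<in>E. card {C. is_cycle V E C \<and> e \<in> C} \<le> 1)"

end

theory Submission
  imports Defs
begin


lemma edge_in: "simple_graph V E \<Longrightarrow> {a,b} \<in> E \<Longrightarrow> a \<in> V \<and> b \<in> V \<and> a \<noteq> b"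
  unfolding simple_graph_def by (metis doubleton_eq_iff)

lemma finite_edges: "simple_graph V E \<Longrightarrow> finite E"
proof -
  assume s: "simple_graph V E"
  have "E \<subseteq> Pow V" using s unfolding simple_graph_def by fastforce
  moreover have "finite V" using s unfolding simple_graph_def by blast
  ultimately show ?thesis by (meson finite_Pow_iff finite_subset)
qed

lemma cycle_sub: "is_cycle V E C \<Longrightarrow> C \<subseteq> E"
  unfolding is_cycle_def by blast

lemma cycle_mono: "is_cycle V E C \<Longrightarrow> V \<subseteq> V' \<Longrightarrow> E \<subseteq> E' \<Longrightarrow> is_cycle V' E' C"
  unfolding is_cycle_def by blast

lemma finite_cycles: "simple_graph V E \<Longrightarrow> finite {C. is_cycle V E C}"
  by (rule finite_subset[of _ "Pow E"]) (auto dest: cycle_sub simp: finite_edges)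

lemma num_cycles_mono: "simple_graph V' E' \<Longrightarrow> V \<subseteq> V' \<Longrightarrow> E \<subseteq> E' \<Longrightarrow> num_cycles V E \<le> num_cycles V' E'"
  unfolding num_cycles_def by (rule card_mono) (auto intro: finite_cycles cycle_mono)

lemma deg2_cycle:
  assumes s: "simple_graph V E" and ne: "V \<noteq> {}"
    and deg: "\<forall>v\<in>V. \<exists>w1 w2. w1 \<noteq> w2 \<and> {v,w1} \<in> E \<and> {v,w2} \<in> E"
  shows "\<exists>C. is_cycle V E C"
proof -
  define P where "P = {p. p \<noteq> [] \<and> distinct p \<and> set p \<subseteq> V \<and> (\<forall>i. Suc i < length p \<longrightarrow> {p!i, p!Suc i} \<in> E)}"
  have fV: "finite V" using s unfolding simple_graph_def by blast
  have "P \<subseteq> {xs. set xs \<subseteq> V \<and> length xs \<le> card V}"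
  proof
    fix q assume "q \<in> P"
    hence q: "distinct q" "set q \<subseteq> V" unfolding P_def by auto
    have "length q = card (set q)" using distinct_card[OF q(1)] by simp
    also have "\<dots> \<le> card V" using card_mono[OF fV q(2)] .
    finally show "q \<in> {xs. set xs \<subseteq> V \<and> length xs \<le> card V}" using q by simp
  qed
  hence fP: "finite P" using finite_lists_length_le[OF fV] finite_subset by blast
  obtain v0 where "v0 \<in> V" using ne by blast
  hence "[v0] \<in> P" unfolding P_def by auto
  hence Pne: "P \<noteq> {}" by blast
  define M where "M = Max (length ` P)"
  have "M \<in> length ` P" unfolding M_def using fP Pne by simp
  then obtain p where pP: "p \<in> P" and pM: "length p = M" by blast
  have maxp: "\<And>q. q \<in> P \<Longrightarrow> length q \<le> length p" using pM fP unfolding M_def by simp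
  have pne: "p \<noteq> []" and pd: "distinct p" and pV: "set p \<subseteq> V"
    and pE: "\<And>i. Suc i < length p \<Longrightarrow> {p!i, p!Suc i} \<in> E" using pP unfolding P_def by auto
  define v where "v = p!0"
  have vV: "v \<in> V" using pne pV unfolding v_def by (simp add: subsetD)
  have nb: "w \<in> set p" if "{v,w} \<in> E" for w
  proof (rule ccontr)
    assume wn: "w \<notin> set p"
    have "w \<in> V" using edge_in[OF s that] by blast
    have "w # p \<in> P" unfolding P_def
    proof (intro CollectI conjI allI impI)
      fix i assume i: "Suc i < length (w # p)"
      show "{(w#p)!i, (w#p)!Suc i} \<in> E"
      proof (cases i)
        case 0 thus ?thesis using that by (simp add: v_def insert_commute)
      next
        case (Suc k) thus ?thesis using pE i by simp
      qed
    qed (use wn pd pV \<open>w \<in> V\<close> in auto)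
    from maxp[OF this] show False by simp
  qed
  obtain w1 w2 where w12: "w1 \<noteq> w2" "{v,w1} \<in> E" "{v,w2} \<in> E" using deg vV by blast
  obtain w where wE: "{v,w} \<in> E" and w0: "w \<noteq> p!0" and w1: "length p \<ge> 2 \<longrightarrow> w \<noteq> p!1"
  proof -
    have a: "w1 \<noteq> p!0" "w2 \<noteq> p!0" using edge_in[OF s w12(2)] edge_in[OF s w12(3)] v_def by auto
    show ?thesis
    proof (cases "w1 = p!1")
      case True
      hence "w2 \<noteq> p!1" using w12(1) by simp
      thus ?thesis using that[OF w12(3) a(2)] by blast
    next
      case False
      thus ?thesis using that[OF w12(2) a(1)] by blast
    qed
  qed
  have "w \<in> set p" using nb[OF wE] .
  then obtain j where j: "j < length p" "p!j = w" by (auto simp: in_set_conv_nth)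
  have j2: "j \<ge> 2"
  proof (rule ccontr)
    assume "\<not> j \<ge> 2"
    hence "j = 0 \<or> j = 1" by auto
    thus False using j w0 w1 by auto
  qed
  define vs where "vs = take (Suc j) p"
  have lvs: "length vs = Suc j" using j unfolding vs_def by simp
  have nvs: "\<And>i. i < Suc j \<Longrightarrow> vs!i = p!i" unfolding vs_def by simp
  have "cycle_edges vs \<subseteq> E"
  proof
    fix e assume "e \<in> cycle_edges vs"
    then obtain i where i: "i < Suc j" and e: "e = {vs!i, vs!((i+1) mod Suc j)}"
    proof -
      have "e \<in> (\<lambda>i. {vs ! i, vs ! ((i + 1) mod length vs)}) ` {0..<length vs}"
        using \<open>e \<in> cycle_edges vs\<close> unfolding cycle_edges_def by (simp del: upt_Suc)
      thus ?thesis using that unfolding lvs by (auto simp del: upt_Suc)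
    qed
    show "e \<in> E"
    proof (cases "i < j")
      case True
      hence "(i+1) mod Suc j = Suc i" by simp
      thus ?thesis using e nvs[of i] nvs[of "Suc i"] True pE[of i] j by simp
    next
      case False
      hence "i = j" using i by simp
      thus ?thesis using e nvs[of j] nvs[of 0] j wE by (simp add: v_def insert_commute)
    qed
  qed
  moreover have "distinct vs" "set vs \<subseteq> V" using pd pV unfolding vs_def
    by (auto dest: in_set_takeD)
  moreover have "3 \<le> length vs" using lvs j2 by simp
  ultimately have "is_cycle V E (cycle_edges vs)" unfolding is_cycle_def by blast
  thus ?thesis by blast
qed



lemma cyc_bound_aux:
  "\<forall>V E. card V + card E = n \<longrightarrow> simple_graph V E \<longrightarrow> V \<noteq> {} \<longrightarrow> card E + 1 \<le> card V + num_cycles V E"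
proof (induction n rule: less_induct)
  case (less n)
  show ?case
  proof (intro allI impI)
    fix V :: "'a set" and E assume n: "card V + card E = n" and s: "simple_graph V E" and ne: "V \<noteq> {}"
    have fV: "finite V" using s unfolding simple_graph_def by simp
    have fE: "finite E" using finite_edges[OF s] .
    show "card E + 1 \<le> card V + num_cycles V E"
    proof (cases "\<forall>v\<in>V. \<exists>w1 w2. w1 \<noteq> w2 \<and> {v,w1} \<in> E \<and> {v,w2} \<in> E")
      case True
      obtain C0 where C0: "is_cycle V E C0" using deg2_cycle[OF s ne True] by blast
      then obtain vs where vs: "length vs \<ge> 3" "C0 = cycle_edges vs" unfolding is_cycle_def by auto
      have "{vs!0, vs!((0+1) mod length vs)} \<in> cycle_edges vs" unfolding cycle_edges_def
        apply (simp only: set_map set_upt)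
        apply (rule image_eqI[of _ _ 0])
        using vs(1) by auto
      then obtain e where eC: "e \<in> C0" using vs(2) by blast
      have eE: "e \<in> E" using eC cycle_sub[OF C0] by blast
      define E' where "E' = E - {e}"
      have s': "simple_graph V E'" using s unfolding simple_graph_def E'_def by blast
      have cE': "card E' = card E - 1" unfolding E'_def using eE fE by simp
      have cE: "card E \<ge> 1" using eE fE card_0_eq by fastforce
      have "card V + card E' < n" using n cE cE' by simp
      hence IH: "card E' + 1 \<le> card V + num_cycles V E'" using less.IH s' ne by blast
      have sub: "{C. is_cycle V E' C} \<subseteq> {C. is_cycle V E C} - {C0}"
      proof
        fix C assume "C \<in> {C. is_cycle V E' C}"
        hence c: "is_cycle V E' C" by simp
        have "is_cycle V E C" using cycle_mono[OF c] unfolding E'_def by blast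
        moreover have "C \<noteq> C0" using cycle_sub[OF c] eC unfolding E'_def by blast
        ultimately show "C \<in> {C. is_cycle V E C} - {C0}" by simp
      qed
      have "num_cycles V E' \<le> card ({C. is_cycle V E C} - {C0})"
        unfolding num_cycles_def by (rule card_mono) (use finite_cycles[OF s] sub in auto)
      also have "\<dots> = num_cycles V E - 1" unfolding num_cycles_def using C0 finite_cycles[OF s] by simp
      finally have "num_cycles V E' \<le> num_cycles V E - 1" .
      moreover have "num_cycles V E \<ge> 1" unfolding num_cycles_def using C0 finite_cycles[OF s]
        by (metis card_0_eq empty_iff less_one mem_Collect_eq not_le)
      ultimately show ?thesis using IH cE cE' by linarith
    next
      case False
      then obtain v where vV: "v \<in> V" and uni: "\<And>w1 w2. {v,w1} \<in> E \<Longrightarrow> {v,w2} \<in> E \<Longrightarrow> w1 = w2"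
        by blast
      show ?thesis
      proof (cases "V = {v}")
        case True
        have "E = {}"
        proof (rule ccontr)
          assume "E \<noteq> {}"
          then obtain e where "e \<in> E" by blast
          then obtain a b where "e = {a,b}" "a \<noteq> b" "a \<in> V" "b \<in> V" using s unfolding simple_graph_def by blast
          thus False using True by simp
        qed
        thus ?thesis using True by simp
      next
        case False
        define V' where "V' = V - {v}"
        define E' where "E' = {e\<in>E. v \<notin> e}"
        have ne': "V' \<noteq> {}" using False vV unfolding V'_def by blast
        have s': "simple_graph V' E'" using s fV unfolding simple_graph_def V'_def E'_def by fastforce
        have cV: "card V' = card V - 1" unfolding V'_def using vV fV by simp
        have cVp: "card V \<ge> 1" using vV fV card_0_eq by fastforce
        have E'E: "card E' \<le> card E" unfolding E'_def by (rule card_mono[OF fE]) blast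
        have "card V' + card E' < n" using n cV cVp E'E by simp
        hence IH: "card E' + 1 \<le> card V' + num_cycles V' E'" using less.IH s' ne' by blast
        have mono: "num_cycles V' E' \<le> num_cycles V E"
          by (rule num_cycles_mono[OF s]) (auto simp: V'_def E'_def)
        have fD: "finite {e\<in>E. v \<in> e}" using fE by simp
        have "card {e\<in>E. v \<in> e} \<le> Suc 0" unfolding card_le_Suc0_iff_eq[OF fD]
        proof (intro ballI)
          fix e1 e2 assume e1: "e1 \<in> {e\<in>E. v \<in> e}" and e2: "e2 \<in> {e\<in>E. v \<in> e}"
          obtain w1 where w1: "e1 = {v,w1}" using e1 s unfolding simple_graph_def by fastforce
          obtain w2 where w2: "e2 = {v,w2}" using e2 s unfolding simple_graph_def by fastforce
          have "w1 = w2" using uni e1 e2 w1 w2 by simp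
          thus "e1 = e2" using w1 w2 by simp
        qed
        moreover have "E = E' \<union> {e\<in>E. v \<in> e}" unfolding E'_def by blast
        hence "card E \<le> card E' + card {e\<in>E. v \<in> e}" by (metis card_Un_le)
        ultimately show ?thesis using IH cV cVp mono by linarith
      qed
    qed
  qed
qed

lemma cyc_bound: "simple_graph V E \<Longrightarrow> V \<noteq> {} \<Longrightarrow> card E + 1 \<le> card V + num_cycles V E"
  using cyc_bound_aux by blast



lemma bip_edge: "(\<forall>e\<in>E. \<exists>u v. e = {u,v} \<and> u \<in> A \<and> v \<in> B) \<Longrightarrow> {a,b} \<in> E \<Longrightarrow> (a \<in> A \<and> b \<in> B) \<or> (a \<in> B \<and> b \<in> A)"
  by (metis doubleton_eq_iff)

lemma cedge: "i < length vs \<Longrightarrow> {vs!i, vs!((i+1) mod length vs)} \<in> cycle_edges vs"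
  unfolding cycle_edges_def
  apply (simp only: set_map set_upt)
  apply (rule image_eqI[of _ _ i])
  by auto

lemma cycle_card4:
  assumes c: "is_cycle V E C" and bp: "\<forall>e\<in>E. \<exists>u v. e = {u,v} \<and> u \<in> A \<and> v \<in> B" and AB: "A \<inter> B = {}"
  shows "card C \<ge> 4"
proof -
  obtain vs where vs: "length vs \<ge> 3" "distinct vs" "cycle_edges vs \<subseteq> E" "C = cycle_edges vs"
    using c unfolding is_cycle_def by auto
  have fC: "finite C" unfolding vs(4) cycle_edges_def by simp
  define L where "L = length vs"
  have L3: "L \<noteq> 3"
  proof
    assume L: "L = 3"
    have "{vs!0, vs!1} \<in> E" using cedge[of 0 vs] L vs(3) unfolding L_def by auto
    moreover have "{vs!1, vs!2} \<in> E" using cedge[of 1 vs] L vs(3) unfolding L_def by (auto simp: numeral_2_eq_2)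
    moreover have "{vs!2, vs!0} \<in> E" using cedge[of 2 vs] L vs(3) unfolding L_def by auto
    ultimately have "(vs!0 \<in> A \<and> vs!1 \<in> B \<or> vs!0 \<in> B \<and> vs!1 \<in> A)"
      "(vs!1 \<in> A \<and> vs!2 \<in> B \<or> vs!1 \<in> B \<and> vs!2 \<in> A)"
      "(vs!2 \<in> A \<and> vs!0 \<in> B \<or> vs!2 \<in> B \<and> vs!0 \<in> A)"
      using bip_edge[OF bp] by auto
    thus False using AB by auto
  qed
  hence L4: "L \<ge> 4" using vs(1) unfolding L_def by linarith
  define a where "a = (\<lambda>i. vs!i)"
  have dist: "\<And>i j. i < L \<Longrightarrow> j < L \<Longrightarrow> a i = a j \<longleftrightarrow> i = j"
    unfolding a_def L_def using vs(2) nth_eq_iff_index_eq by blast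
  define k where "k = 4 mod L"
  have kk: "k = 0 \<or> (k = 4 \<and> 4 < L)"
  proof (cases "L = 4")
    case True thus ?thesis unfolding k_def by simp
  next
    case False thus ?thesis unfolding k_def using L4 by simp
  qed
  have k: "k < L" "k \<noteq> 1" "k \<noteq> 2" "k \<noteq> 3" using kk L4 by auto
  have "vs \<noteq> []" using L4 unfolding L_def by auto
  hence e1: "{a 0, a 1} \<in> C" using cedge[of 0 vs] L4 vs(4) unfolding a_def L_def by simp
  have e2: "{a 1, a 2} \<in> C" using cedge[of 1 vs] L4 vs(4) unfolding a_def L_def
    by (simp add: numeral_2_eq_2)
  have e3: "{a 2, a 3} \<in> C" using cedge[of 2 vs] L4 vs(4) unfolding a_def L_def
    by (simp add: numeral_3_eq_3 numeral_2_eq_2)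
  have e4: "{a 3, a k} \<in> C" using cedge[of 3 vs] L4 vs(4) unfolding a_def L_def k_def
    by simp
  note e = e1 e2 e3 e4
  have d: "a 0 \<noteq> a 1" "a 0 \<noteq> a 2" "a 0 \<noteq> a 3" "a 1 \<noteq> a 2" "a 1 \<noteq> a 3" "a 2 \<noteq> a 3"
    "a k \<noteq> a 1" "a k \<noteq> a 2" "a k \<noteq> a 3"
    using dist L4 k by auto
  have "card {{a 0, a 1}, {a 1, a 2}, {a 2, a 3}, {a 3, a k}} = 4"
    using d by (auto simp: doubleton_eq_iff)
  moreover have "card {{a 0, a 1}, {a 1, a 2}, {a 2, a 3}, {a 3, a k}} \<le> card C"
    by (rule card_mono[OF fC]) (use e in auto)
  ultimately show ?thesis by simp
qed



theorem mainTheorem2: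
  fixes VG :: "'a set" and EG :: "'a set set" and X Y :: "'a set"
    and x y x' y' :: 'a and E' :: "'a set set"
  assumes G: "simple_graph VG EG"
    and bip: "bipartition VG EG X Y"
    and div3: "3 dvd card VG"
    and new: "distinct [x, y, x', y']" "x \<notin> VG" "y \<notin> VG" "x' \<notin> VG" "y' \<notin> VG"
    and E': "E' \<subseteq> EG \<union> {{x, v} | v. v \<in> X} \<union> {{y, v} | v. v \<in> Y} \<union> {{x, y}, {x, x'}, {x', y'}, {y, y'}}"
    and cac: "cactus (VG \<union> {x, y, x', y'}) E'"
    and del: "int (card ((EG \<union> {{x, v} | v. v \<in> X} \<union> {{y, v} | v. v \<in> Y} \<union> {{x, y}, {x, x'}, {x', y'}, {y, y'}}) - E'))
              \<le> int (card (EG \<union> {{x, v} | v. v \<in> X} \<union> {{y, v} | v. v \<in> Y} \<union> {{x, y}, {x, x'}, {x', y'}, {y, y'}}))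
                 - 4 * int (card VG) div 3 - 4"
  shows "num_cycles (VG \<union> {x, y, x', y'}) E' = card VG div 3 + 1
       \<and> int (num_cycles (VG \<union> {x, y, x', y'}) E') = (int (card (VG \<union> {x, y, x', y'})) - 1) div 3"
proof -
  define VH where "VH = VG \<union> {x, y, x', y'}"
  define EH where "EH = EG \<union> {{x, v} | v. v \<in> X} \<union> {{y, v} | v. v \<in> Y} \<union> {{x, y}, {x, x'}, {x', y'}, {y, y'}}"
  define S where "S = {C. is_cycle VH E' C}"
  define c where "c = num_cycles VH E'"
  have cS: "c = card S" unfolding c_def S_def num_cycles_def ..
  have sH: "simple_graph VH E'" using cac unfolding cactus_def VH_def by blast
  have fVG: "finite VG" using G unfolding simple_graph_def by simp
  have XV: "X \<subseteq> VG" "Y \<subseteq> VG" "X \<inter> Y = {}" using bip unfolding bipartition_def by auto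
  have cVH: "card VH = card VG + 4"
  proof -
    have "card {x, y, x', y'} = 4" using new(1) by simp
    moreover have "VG \<inter> {x, y, x', y'} = {}" using new by auto
    moreover have "card VH = card VG + card {x, y, x', y'}" unfolding VH_def
      by (rule card_Un_disjoint) (use fVG new in auto)
    ultimately show ?thesis by simp
  qed
  have bound: "card E' + 1 \<le> card VH + c" unfolding c_def by (rule cyc_bound[OF sH]) (simp add: VH_def)
  have fEH: "finite EH"
  proof -
    have fX: "finite X" "finite Y" using finite_subset[OF XV(1) fVG] finite_subset[OF XV(2) fVG] by auto
    have "finite EG" using finite_edges[OF G] .
    moreover have "finite {{x, v} | v. v \<in> X}"
      by (rule finite_subset[of _ "(\<lambda>v. {x,v}) ` X"]) (use fX in auto)
    moreover have "finite {{y, v} | v. v \<in> Y}"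
      by (rule finite_subset[of _ "(\<lambda>v. {y,v}) ` Y"]) (use fX in auto)
    ultimately show ?thesis unfolding EH_def by simp
  qed
  have E'H: "E' \<subseteq> EH" using E' unfolding EH_def .
  have fE': "finite E'" using finite_subset[OF E'H fEH] .
  obtain q where q: "card VG = 3 * q" using div3 by blast
  have "card (EH - E') = card EH - card E'" using card_Diff_subset[OF fE' E'H] .
  moreover have "card E' \<le> card EH" using card_mono[OF fEH E'H] .
  moreover have "4 * int (card VG) div 3 = 4 * int q" using q by simp
  ultimately have mE: "card E' \<ge> 4 * q + 4" using del unfolding EH_def[symmetric] by linarith
  define A where "A = X \<union> {y, x'}"
  define B where "B = Y \<union> {x, y'}"
  have AB: "A \<inter> B = {}" unfolding A_def B_def using XV new by auto
  have bp: "\<forall>e\<in>E'. \<exists>u v. e = {u,v} \<and> u \<in> A \<and> v \<in> B"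
  proof
    fix e assume "e \<in> E'"
    hence "e \<in> EH" using E'H by blast
    hence "e \<in> EG \<or> (\<exists>v\<in>X. e = {v, x}) \<or> (\<exists>v\<in>Y. e = {y, v}) \<or> e = {y, x} \<or> e = {x', x} \<or> e = {x', y'} \<or> e = {y, y'}"
      unfolding EH_def by (auto simp: insert_commute)
    moreover have "\<forall>e\<in>EG. \<exists>u v. e = {u,v} \<and> u \<in> X \<and> v \<in> Y" using bip unfolding bipartition_def by blast
    ultimately show "\<exists>u v. e = {u,v} \<and> u \<in> A \<and> v \<in> B" unfolding A_def B_def by fastforce
  qed
  have c4: "\<And>C. C \<in> S \<Longrightarrow> card C \<ge> 4" unfolding S_def using cycle_card4[OF _ bp AB] by blast
  have fS: "finite S" unfolding S_def using finite_cycles[OF sH] .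
  have disj: "pairwise disjnt S"
  proof (rule pairwiseI)
    fix C1 C2 assume C1: "C1 \<in> S" and C2: "C2 \<in> S" and ne: "C1 \<noteq> C2"
    show "disjnt C1 C2"
    proof (rule ccontr)
      assume "\<not> disjnt C1 C2"
      then obtain e where e: "e \<in> C1" "e \<in> C2" unfolding disjnt_def by blast
      have "e \<in> E'" using e C1 cycle_sub unfolding S_def by blast
      hence le: "card {C. is_cycle VH E' C \<and> e \<in> C} \<le> 1" using cac unfolding cactus_def VH_def by blast
      have "finite {C. is_cycle VH E' C \<and> e \<in> C}" using fS unfolding S_def by (rule rev_finite_subset) blast
      hence "\<forall>a1\<in>{C. is_cycle VH E' C \<and> e \<in> C}. \<forall>a2\<in>{C. is_cycle VH E' C \<and> e \<in> C}. a1 = a2"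
        using le card_le_Suc0_iff_eq by (metis One_nat_def)
      thus False using C1 C2 e ne unfolding S_def by blast
    qed
  qed
  have "card (\<Union>S) = sum card S"
  proof (rule card_Union_disjoint[OF disj])
    fix C assume "C \<in> S"
    hence "C \<subseteq> E'" unfolding S_def by (simp add: cycle_sub)
    thus "finite C" using fE' finite_subset by auto
  qed
  moreover have "sum card S \<ge> sum (\<lambda>_. 4) S" using c4 by (meson sum_mono)
  moreover have "card (\<Union>S) \<le> card E'" using fE' by (rule card_mono) (auto simp: S_def dest: cycle_sub)
  ultimately have "4 * c \<le> card E'" unfolding cS by simp
  hence "c = q + 1" using bound mE cVH q by linarith
  thus ?thesis unfolding c_def VH_def[symmetric] using q cVH by simp
qed

end
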